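(* Let $\nu=(\nu_x,\nu_y,\nu_t)\in\mathbb{S}^{2n}$ with $\nu_t=0$, let $d\in\mathbb{R}$ and $\Pi^+_{\nu,d}=\{\xi\in\mathbb{R}^{2n+1}:\langle\xi,\nu\rangle>d\}$. Then for every $u\in C_0^\infty(\Pi^+_{\nu,d})$, \[ \int_{\Pi^+_{\nu,d}}|\nabla_{\mathbb{H}^n}u|^2\,d\xi\ge\frac14\int_{\Pi^+_{\nu,d}}\frac{|u|^2}{\operatorname{dist}(\xi,\partial\Pi^+_{\nu,d})^2}\,d\xi . \]
   Context: $\mathbb{H}^n$ is $\mathbb{R}^{2n+1}$ with points $\xi=(x,y,t)$, $x,y\in\mathbb{R}^n$, $t\in\mathbb{R}$; correspondingly $\nu=(\nu_x,\nu_y,\nu_t)$ with $\nu_x,\nu_y\in\mathbb{R}^n$, $\nu_t\in\mathbb{R}$. For $1\le i\le n$, $X_i=\partial_{x_i}+2y_i\partial_t$, $Y_i=\partial_{y_i}-2x_i\partial_t$; $\nabla_{\mathbb{H}^n}u=(X_1u,\dots,X_nu,Y_1u,\dots,Y_nu)$ and $|\nabla_{\mathbb{H}^n}u|^2=\sum_i(|X_iu|^2+|Y_iu|^2)$. $\langle\cdot,\cdot\rangle$ is the Euclidean inner product, $\mathbb{S}^{2n}$ the Euclidean unit sphere in $\mathbb{R}^{2n+1}$, $\operatorname{dist}$ the Euclidean distance. Functions are real-valued. *)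

theory Defs
  imports "HOL-Analysis.Analysis"
begin

type_synonym 'n heis = "(real^'n) \<times> (real^'n) \<times> real"

coinductive smooth_on :: "'a::euclidean_space set \<Rightarrow> ('a \<Rightarrow> real) \<Rightarrow> bool" where
  "\<lbrakk> f differentiable_on S;
     \<forall>v. smooth_on S (\<lambda>x. frechet_derivative f (at x) v) \<rbrakk> \<Longrightarrow> smooth_on S f"

text \<open>C_0^infinity(U): smooth functions (here extended by zero to the whole space) whose
  support is a compact subset of the open set U.\<close>
definition C0_infty :: "'a::euclidean_space set \<Rightarrow> ('a \<Rightarrow> real) set" where
  "C0_infty U = {u. smooth_on UNIV u \<and> compact (closure {x. u x \<noteq> 0})
                   \<and> closure {x. u x \<noteq> 0} \<subseteq> U}"

definition heisX :: "'n::finite \<Rightarrow> ('n heis \<Rightarrow> real) \<Rightarrow> 'n heis \<Rightarrow> real" where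
  "heisX i u \<xi> = (case \<xi> of (x, y, t) \<Rightarrow>
     frechet_derivative u (at \<xi>) (axis i 1, 0, 0)
     + 2 * (y $ i) * frechet_derivative u (at \<xi>) (0, 0, 1))"

definition heisY :: "'n::finite \<Rightarrow> ('n heis \<Rightarrow> real) \<Rightarrow> 'n heis \<Rightarrow> real" where
  "heisY i u \<xi> = (case \<xi> of (x, y, t) \<Rightarrow>
     frechet_derivative u (at \<xi>) (0, axis i 1, 0)
     - 2 * (x $ i) * frechet_derivative u (at \<xi>) (0, 0, 1))"

definition heis_grad_sq :: "('n::finite heis \<Rightarrow> real) \<Rightarrow> 'n heis \<Rightarrow> real" where
  "heis_grad_sq u \<xi> = (\<Sum>i\<in>UNIV. (heisX i u \<xi>)\<^sup>2 + (heisY i u \<xi>)\<^sup>2)"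

definition halfspace_plus :: "'n::finite heis \<Rightarrow> real \<Rightarrow> 'n heis set" where
  "halfspace_plus \<nu> d = {\<xi>. \<xi> \<bullet> \<nu> > d}"

end

theory Submission
  imports Defs
begin


lemma fiber_nn:
  fixes h :: "'a::euclidean_space \<times> 'b::euclidean_space \<Rightarrow> ennreal" and F :: "'a \<Rightarrow> 'b \<Rightarrow> 'b"
  assumes h[measurable]: "h \<in> borel_measurable borel"
    and F[measurable]: "(\<lambda>p. (fst p, F (fst p) (snd p))) \<in> borel_measurable borel"
    and inv: "\<And>a k. k \<in> borel_measurable borel \<Longrightarrow> (\<integral>\<^sup>+b. k (F a b) \<partial>lborel) = (\<integral>\<^sup>+b. k b \<partial>lborel)"
  shows "(\<integral>\<^sup>+p. h (fst p, F (fst p) (snd p)) \<partial>lborel) = (\<integral>\<^sup>+p. h p \<partial>lborel)"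
proof -
  have S: "sets (lborel \<Otimes>\<^sub>M lborel) = sets (borel :: ('a \<times> 'b) measure)"
    by (metis lborel_prod sets_lborel)
  have m1: "(\<lambda>p. h (fst p, F (fst p) (snd p))) \<in> borel_measurable (lborel \<Otimes>\<^sub>M lborel)"
    unfolding measurable_cong_sets[OF S refl] using h F by (rule measurable_compose[rotated])
  have m2: "h \<in> borel_measurable (lborel \<Otimes>\<^sub>M lborel)"
    unfolding measurable_cong_sets[OF S refl] by (rule h)
  have "(\<integral>\<^sup>+p. h (fst p, F (fst p) (snd p)) \<partial>lborel) = (\<integral>\<^sup>+p. h (fst p, F (fst p) (snd p)) \<partial>(lborel \<Otimes>\<^sub>M lborel))"
    by (simp add: lborel_prod)
  also have "\<dots> = (\<integral>\<^sup>+x. \<integral>\<^sup>+y. h (x, F x y) \<partial>lborel \<partial>lborel)"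
    using lborel.nn_integral_fst[OF m1] by simp
  also have "\<dots> = (\<integral>\<^sup>+x. \<integral>\<^sup>+y. h (x, y) \<partial>lborel \<partial>lborel)"
  proof (rule nn_integral_cong)
    fix x
    have "(\<lambda>y. h (x, y)) \<in> borel_measurable borel" by measurable
    then show "(\<integral>\<^sup>+y. h (x, F x y) \<partial>lborel) = (\<integral>\<^sup>+y. h (x, y) \<partial>lborel)"
      using inv[of "\<lambda>y. h (x, y)" x] by simp
  qed
  also have "\<dots> = (\<integral>\<^sup>+p. h p \<partial>(lborel \<Otimes>\<^sub>M lborel))"
    using lborel.nn_integral_fst[OF m2] by simp
  also have "\<dots> = (\<integral>\<^sup>+p. h p \<partial>lborel)" by (simp add: lborel_prod)
  finally show ?thesis .
qed

lemma shift_nn: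
  fixes k :: "real \<Rightarrow> ennreal"
  assumes "k \<in> borel_measurable borel"
  shows "(\<integral>\<^sup>+b. k (b + e) \<partial>lborel) = (\<integral>\<^sup>+b. k b \<partial>lborel)"
  using nn_integral_real_affine[OF assms, of 1 e] by (simp add: add.commute)



lemma shear_distr:
  fixes c :: "'a::euclidean_space \<Rightarrow> 'b::euclidean_space \<Rightarrow> real"
  assumes c: "continuous_on UNIV (\<lambda>p. c (fst p) (snd p))"
  defines "S \<equiv> (\<lambda>p::'a \<times> 'b \<times> real. (fst p, fst (snd p), snd (snd p) + c (fst p) (fst (snd p))))"
  shows "distr lborel borel S = lborel"
proof -
  have "continuous_on UNIV (\<lambda>p::'a \<times> 'b \<times> real. (fst p, fst (snd p)))"
    by (intro continuous_intros)
  from continuous_on_compose2[OF c this] have cc: "continuous_on UNIV (\<lambda>p::'a \<times> 'b \<times> real. c (fst p) (fst (snd p)))"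
    by simp
  have cS: "continuous_on UNIV S" unfolding S_def
    by (intro continuous_intros cc)
  have mS[measurable]: "S \<in> borel_measurable borel" by (rule borel_measurable_continuous_onI[OF cS])
  have cx: "continuous_on UNIV (c x)" for x
  proof -
    have "continuous_on UNIV (\<lambda>y::'b. (x, y))" by (intro continuous_intros)
    from continuous_on_compose2[OF c this] show ?thesis by simp
  qed
  have key: "(\<integral>\<^sup>+p. k (S p) \<partial>lborel) = (\<integral>\<^sup>+p. k p \<partial>lborel)" if k[measurable]: "k \<in> borel_measurable borel" for k
  proof -
    have "(\<integral>\<^sup>+p. k (S p) \<partial>lborel) = (\<integral>\<^sup>+p. k (fst p, (\<lambda>x q. (fst q, snd q + c x (fst q))) (fst p) (snd p)) \<partial>lborel)"
      by (simp add: S_def)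
    also have "\<dots> = (\<integral>\<^sup>+p. k p \<partial>lborel)"
    proof (rule fiber_nn[OF k])
      show "(\<lambda>p. (fst p, (\<lambda>x q. (fst q, snd q + c x (fst q))) (fst p) (snd p))) \<in> borel_measurable borel"
        using mS by (simp add: S_def)
      fix x and k2 :: "'b \<times> real \<Rightarrow> ennreal" assume k2[measurable]: "k2 \<in> borel_measurable borel"
      have "(\<integral>\<^sup>+q. k2 (fst q, (\<lambda>y t. t + c x y) (fst q) (snd q)) \<partial>lborel) = (\<integral>\<^sup>+q. k2 q \<partial>lborel)"
      proof (rule fiber_nn[OF k2, of "\<lambda>y t. t + c x y"])
        show "(\<lambda>p. (fst p, (\<lambda>y t. t + c x y) (fst p) (snd p))) \<in> borel_measurable borel"
          by (intro borel_measurable_continuous_onI continuous_intros continuous_on_compose2[OF cx]) auto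
        fix y and k3 :: "real \<Rightarrow> ennreal" assume "k3 \<in> borel_measurable borel"
        then show "(\<integral>\<^sup>+t. k3 ((\<lambda>y t. t + c x y) y t) \<partial>lborel) = (\<integral>\<^sup>+t. k3 t \<partial>lborel)"
          using shift_nn by simp
      qed
      then show "(\<integral>\<^sup>+q. k2 ((\<lambda>x q. (fst q, snd q + c x (fst q))) x q) \<partial>lborel) = (\<integral>\<^sup>+q. k2 q \<partial>lborel)"
        by (simp add: add.commute)
    qed
    finally show ?thesis .
  qed
  show ?thesis
  proof (rule measure_eqI)
    show "sets (distr lborel borel S) = sets lborel" by simp
    fix A assume "A \<in> sets (distr lborel borel S)"
    then have A[measurable]: "A \<in> sets borel" by simp
    have "emeasure (distr lborel borel S) A = (\<integral>\<^sup>+p. indicator A p \<partial>distr lborel borel S)"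
      using A by (simp add: nn_integral_indicator)
    also have "\<dots> = (\<integral>\<^sup>+p. indicator A (S p) \<partial>lborel)"
      by (rule nn_integral_distr) measurable
    also have "\<dots> = (\<integral>\<^sup>+p. indicator A p \<partial>lborel)" by (rule key) measurable
    also have "\<dots> = emeasure lborel A" by simp
    finally show "emeasure (distr lborel borel S) A = emeasure lborel A" .
  qed
qed



lemma Phi_distr:
  fixes a b :: "real^'n" and s :: real
  shows "distr lborel borel (\<lambda>\<xi>::'n heis. \<xi> + s *\<^sub>R (a, b, 2*(a \<bullet> fst (snd \<xi>) - b \<bullet> fst \<xi>))) = lborel"
proof -
  define c where "c = (\<lambda>(x::real^'n) (y::real^'n). s*(2*(a \<bullet> y - b \<bullet> x)))"
  have cc: "continuous_on UNIV (\<lambda>p. c (fst p) (snd p))" unfolding c_def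
    by (intro continuous_intros)
  define S where "S \<equiv> (\<lambda>p::'n heis. (fst p, fst (snd p), snd (snd p) + c (fst p) (fst (snd p))))"
  have SD: "distr lborel borel S = lborel" unfolding S_def by (rule shear_distr[OF cc])
  have cS: "continuous_on UNIV S" unfolding S_def c_def by (intro continuous_intros)
  define T where "T = ((+) (s *\<^sub>R a, s *\<^sub>R b, 0::real) :: 'n heis \<Rightarrow> 'n heis)"
  have eq: "(\<lambda>\<xi>::'n heis. \<xi> + s *\<^sub>R (a, b, 2*(a \<bullet> fst (snd \<xi>) - b \<bullet> fst \<xi>))) = T \<circ> S"
    by (auto simp: fun_eq_iff S_def T_def c_def algebra_simps)
  have mS: "S \<in> measurable lborel borel" using borel_measurable_continuous_onI[OF cS] by simp
  have mT: "T \<in> measurable borel borel" unfolding T_def by (intro borel_measurable_continuous_onI continuous_intros)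
  show ?thesis unfolding eq
    using distr_distr[OF mT mS] SD by (simp add: T_def lborel_distr_plus)
qed



lemma integral_deriv_zero:
  fixes f g :: "'a::euclidean_space \<Rightarrow> real" and w :: "'a \<Rightarrow> 'a" and K :: "'a set"
  assumes pres: "\<And>s. distr lborel borel (\<lambda>\<xi>. \<xi> + s *\<^sub>R w \<xi>) = lborel"
    and wc: "continuous_on UNIV w"
    and winv: "\<And>\<xi> r. w (\<xi> + r *\<^sub>R w \<xi>) = w \<xi>"
    and fc: "continuous_on UNIV f" and gc: "continuous_on UNIV g"
    and K: "compact K" and f0: "\<And>x. x \<notin> K \<Longrightarrow> f x = 0" and g0: "\<And>x. x \<notin> K \<Longrightarrow> g x = 0"
    and der: "\<And>\<xi> r. ((\<lambda>r. f (\<xi> + r *\<^sub>R w \<xi>)) has_real_derivative g (\<xi> + r *\<^sub>R w \<xi>)) (at r)"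
  shows "integral\<^sup>L lborel g = 0"
proof -
  have "bounded (g ` K)" using compact_continuous_image[OF continuous_on_subset[OF gc] K] compact_imp_bounded by auto
  then obtain C where C: "\<And>x. x \<in> K \<Longrightarrow> \<bar>g x\<bar> \<le> C" unfolding bounded_iff by auto
  have Cg: "\<bar>g x\<bar> \<le> max C 0" for x using C[of x] g0[of x] by (cases "x \<in> K") auto
  define K' where "K' = (\<lambda>p. snd p - fst p *\<^sub>R w (snd p)) ` ({0..1::real} \<times> K)"
  have K': "compact K'" unfolding K'_def
    by (intro compact_continuous_image compact_Times K compact_Icc continuous_intros
        continuous_on_compose2[OF wc]) auto
  have fm[measurable]: "f \<in> borel_measurable borel" by (rule borel_measurable_continuous_onI[OF fc])
  have gm[measurable]: "g \<in> borel_measurable borel" by (rule borel_measurable_continuous_onI[OF gc])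
  have fK: "f = (\<lambda>x. indicator K x *\<^sub>R f x)" using f0 by (auto simp: fun_eq_iff indicator_def)
  have fi: "integrable lborel f" by (subst fK, rule borel_integrable_compact[OF K continuous_on_subset[OF fc]]) auto
  define sq where "sq k = 1 / real (Suc k)" for k
  have sq0: "sq k > 0" "sq k \<le> 1" for k by (auto simp: sq_def)
  define q where "q k \<xi> = (f (\<xi> + sq k *\<^sub>R w \<xi>) - f \<xi>) / sq k" for k \<xi>
  have Phim[measurable]: "(\<lambda>\<xi>. \<xi> + s *\<^sub>R w \<xi>) \<in> borel_measurable borel" for s
    by (intro borel_measurable_continuous_onI continuous_intros wc)
  have fPhi: "integral\<^sup>L lborel (\<lambda>\<xi>. f (\<xi> + s *\<^sub>R w \<xi>)) = integral\<^sup>L lborel f" for s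
    using integral_distr[OF _ fm, of "\<lambda>\<xi>. \<xi> + s *\<^sub>R w \<xi>" lborel] pres[of s] by simp
  have fPhii: "integrable lborel (\<lambda>\<xi>. f (\<xi> + s *\<^sub>R w \<xi>))" for s
    using integrable_distr_eq[OF _ fm, of "\<lambda>\<xi>. \<xi> + s *\<^sub>R w \<xi>" lborel] pres[of s] fi by simp
  have q0: "integral\<^sup>L lborel (q k) = 0" for k
    unfolding q_def using fPhi fPhii fi by simp
  have lim: "(\<lambda>k. integral\<^sup>L lborel (q k)) \<longlonglongrightarrow> integral\<^sup>L lborel g"
  proof (rule integral_dominated_convergence[where w="\<lambda>x. indicator K' x *\<^sub>R max C 0"])
    show "g \<in> borel_measurable lborel" by simp
    show "q k \<in> borel_measurable lborel" for k unfolding q_def by measurable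
    show "integrable lborel (\<lambda>x. indicator K' x *\<^sub>R max C 0)"
      by (rule borel_integrable_compact[OF K']) auto
    have sqlim: "filterlim sq (at 0) sequentially"
    proof -
      have "sq = (\<lambda>n. inverse (real (Suc n)))" by (auto simp: fun_eq_iff sq_def inverse_eq_divide)
      then have "sq \<longlonglongrightarrow> 0" using LIMSEQ_inverse_real_of_nat by simp
      moreover have "\<forall>\<^sub>F x in sequentially. sq x \<noteq> 0" using sq0(1) by (intro always_eventually) (metis less_irrefl)
      ultimately show ?thesis unfolding filterlim_at by auto
    qed
    show "AE x in lborel. (\<lambda>k. q k x) \<longlonglongrightarrow> g x"
    proof (rule AE_I2)
      fix x
      have "((\<lambda>h. ((\<lambda>r. f (x + r *\<^sub>R w x)) (0 + h) - (\<lambda>r. f (x + r *\<^sub>R w x)) 0) / h) \<longlongrightarrow> g x) (at 0)"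
        using der[of x 0] unfolding DERIV_def by simp
      from filterlim_compose[OF this sqlim] show "(\<lambda>k. q k x) \<longlonglongrightarrow> g x"
        by (simp add: q_def o_def)
    qed
    show "AE x in lborel. norm (q k x) \<le> indicator K' x *\<^sub>R max C 0" for k
    proof (rule AE_I2)
      fix x
      show "norm (q k x) \<le> indicator K' x *\<^sub>R max C 0"
      proof (cases "x \<in> K'")
        case True
        obtain z where "0 < z" "z < sq k" and z: "f (x + sq k *\<^sub>R w x) - f (x + 0 *\<^sub>R w x) = (sq k - 0) * g (x + z *\<^sub>R w x)"
          using MVT2[OF sq0(1)[of k], of "\<lambda>r. f (x + r *\<^sub>R w x)" "\<lambda>r. g (x + r *\<^sub>R w x)"] der by blast
        then have "q k x = g (x + z *\<^sub>R w x)" using sq0[of k] by (simp add: q_def)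
        then show ?thesis using True Cg by simp
      next
        case False
        have "x \<notin> K" using False unfolding K'_def by (auto intro!: image_eqI[where x="(0, x)"])
        moreover have "x + sq k *\<^sub>R w x \<notin> K"
        proof
          assume "x + sq k *\<^sub>R w x \<in> K"
          then have "(x + sq k *\<^sub>R w x) - sq k *\<^sub>R w (x + sq k *\<^sub>R w x) \<in> K'"
            unfolding K'_def using sq0[of k] by (auto intro!: image_eqI[where x="(sq k, x + sq k *\<^sub>R w x)"])
          then show False using False winv by simp
        qed
        ultimately show ?thesis using f0 False by (simp add: q_def)
      qed
    qed
  qed
  then have "(\<lambda>k. 0::real) \<longlonglongrightarrow> integral\<^sup>L lborel g" using q0 by simp
  then show ?thesis by (simp add: LIMSEQ_const_iff)
qed



lemma glue_cont:
  fixes h :: "'a::topological_space \<Rightarrow> real"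
  assumes "open H" "K \<subseteq> H" "closed K" "continuous_on H h" "\<And>x. x \<notin> K \<Longrightarrow> h x = 0"
  shows "continuous_on UNIV h"
proof -
  have "continuous_on (-K) h"
    using continuous_on_const[of "-K" 0] by (rule continuous_on_cong[THEN iffD1, rotated 2]) (use assms in auto)
  then have "continuous_on (H \<union> -K) h"
    using assms by (intro continuous_on_open_Un) auto
  moreover have "H \<union> -K = UNIV" using assms by auto
  ultimately show ?thesis by simp
qed

lemma infdist_hyperplane:
  fixes \<nu> \<xi> :: "'a::euclidean_space"
  assumes "norm \<nu> = 1"
  shows "infdist \<xi> {x. \<nu> \<bullet> x = d} = \<bar>\<xi> \<bullet> \<nu> - d\<bar>"
proof (rule antisym)
  have nn: "\<nu> \<bullet> \<nu> = 1" using assms by (simp add: norm_eq_sqrt_inner)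
  define x0 where "x0 = \<xi> - (\<xi> \<bullet> \<nu> - d) *\<^sub>R \<nu>"
  have "\<nu> \<bullet> x0 = d" unfolding x0_def by (simp add: inner_diff_right nn inner_commute)
  then have "infdist \<xi> {x. \<nu> \<bullet> x = d} \<le> dist \<xi> x0" by (intro infdist_le) auto
  also have "\<dots> = \<bar>\<xi> \<bullet> \<nu> - d\<bar>" unfolding x0_def dist_norm using assms by simp
  finally show "infdist \<xi> {x. \<nu> \<bullet> x = d} \<le> \<bar>\<xi> \<bullet> \<nu> - d\<bar>" .
  have ne: "{x. \<nu> \<bullet> x = d} \<noteq> {}" using \<open>\<nu> \<bullet> x0 = d\<close> by auto
  show "\<bar>\<xi> \<bullet> \<nu> - d\<bar> \<le> infdist \<xi> {x. \<nu> \<bullet> x = d}"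
    unfolding infdist_notempty[OF ne]
  proof (rule cINF_greatest[OF ne])
    fix x assume "x \<in> {x. \<nu> \<bullet> x = d}"
    then have "\<xi> \<bullet> \<nu> - d = (\<xi> - x) \<bullet> \<nu>" using inner_diff_left[of \<xi> x \<nu>] inner_commute[of x \<nu>] by simp
    also have "\<bar>\<dots>\<bar> \<le> norm (\<xi> - x) * norm \<nu>" by (rule Cauchy_Schwarz_ineq2)
    finally show "\<bar>\<xi> \<bullet> \<nu> - d\<bar> \<le> dist \<xi> x" using assms by (simp add: dist_norm)
  qed
qed



lemma lin_comb:
  fixes L :: "real^'n \<Rightarrow> real"
  assumes "linear L"
  shows "L a = (\<Sum>i\<in>UNIV. a$i * L (axis i 1))"
proof -
  have "L a = L (\<Sum>i\<in>UNIV. a$i *\<^sub>R axis i 1)"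
    using basis_expansion[of a] by (simp add: scalar_mult_eq_scaleR)
  also have "\<dots> = (\<Sum>i\<in>UNIV. a$i * L (axis i 1))"
    using assms by (simp add: linear_sum linear_scale)
  finally show ?thesis .
qed

lemma CS_step:
  fixes Dx :: "'n::finite heis \<Rightarrow> real" and a b x y :: "real^'n" and t :: real
  assumes lin: "linear Dx" and ab1: "a \<bullet> a + b \<bullet> b = 1"
  defines "X \<equiv> (\<lambda>i. Dx (axis i 1, 0, 0) + 2 * (y $ i) * Dx (0, 0, 1))"
    and "Y \<equiv> (\<lambda>i. Dx (0, axis i 1, 0) - 2 * (x $ i) * Dx (0, 0, 1))"
  shows "(Dx (a, b, 2*(a \<bullet> y - b \<bullet> x)))\<^sup>2 \<le> (\<Sum>i\<in>UNIV. (X i)\<^sup>2 + (Y i)\<^sup>2)"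
proof -
  define c where "c = 2*(a \<bullet> y - b \<bullet> x)"
  have l1: "linear (\<lambda>v::real^'n. Dx (v, 0, 0))"
    using linear_compose[OF _ lin, of "\<lambda>v::real^'n. (v, 0::real^'n, 0::real)"] by (simp add: o_def linear_iff)
  have l2: "linear (\<lambda>v::real^'n. Dx (0, v, 0))"
    using linear_compose[OF _ lin, of "\<lambda>v::real^'n. (0::real^'n, v, 0::real)"] by (simp add: o_def linear_iff)
  have split: "(a, b, c) = (a, 0, 0) + (0, b, 0) + c *\<^sub>R ((0::real^'n), (0::real^'n), 1::real)" by simp
  have "Dx (a, b, c) = Dx ((a, 0, 0) + (0, b, 0) + c *\<^sub>R ((0::real^'n), (0::real^'n), 1::real))"
    by (rule arg_cong[OF split])
  also have "\<dots> = Dx (a, 0, 0) + Dx (0, b, 0) + c * Dx (0, 0, 1)"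
    by (simp only: linear_add[OF lin] linear_scale[OF lin] real_scaleR_def)
  also have "\<dots> = (\<Sum>i\<in>UNIV. a$i * X i) + (\<Sum>i\<in>UNIV. b$i * Y i)"
    unfolding lin_comb[OF l1, of a] lin_comb[OF l2, of b] X_def Y_def c_def
    by (simp add: inner_vec_def algebra_simps sum.distrib sum_distrib_left sum_distrib_right sum_subtractf)
  also have "\<dots> = (a, b) \<bullet> ((\<chi> i. X i), (\<chi> i. Y i))"
    by (simp add: inner_vec_def)
  finally have eq: "Dx (a, b, c) = (a, b) \<bullet> ((\<chi> i. X i), (\<chi> i. Y i))" .
  have "(Dx (a, b, c))\<^sup>2 \<le> ((a, b) \<bullet> (a, b)) * (((\<chi> i. X i), (\<chi> i. Y i)) \<bullet> ((\<chi> i. X i), (\<chi> i. Y i)))"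
    unfolding eq by (rule Cauchy_Schwarz_ineq)
  also have "\<dots> = (\<Sum>i\<in>UNIV. (X i)\<^sup>2 + (Y i)\<^sup>2)"
    using ab1 by (simp add: inner_vec_def power2_eq_square sum.distrib)
  finally show ?thesis unfolding c_def .
qed



lemma integrable_cK:
  fixes h :: "'a::euclidean_space \<Rightarrow> real"
  assumes "continuous_on UNIV h" "compact K" "\<And>x. x \<notin> K \<Longrightarrow> h x = 0"
  shows "integrable lborel h"
proof -
  have "integrable lborel (\<lambda>x. indicator K x *\<^sub>R h x)" by (rule borel_integrable_compact[OF assms(2) continuous_on_subset[OF assms(1)]]) auto
  also have "(\<lambda>x. indicator K x *\<^sub>R h x) = h" using assms(3) by (auto simp: fun_eq_iff indicator_def)
  finally show ?thesis .
qed

lemma quot_alg: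
  fixes U W e :: real
  assumes "e \<noteq> 0"
  shows "2 * U * W / e - U\<^sup>2 / e\<^sup>2 = (2 * U * W * e - 1 * U\<^sup>2) / (e ^ Suc (Suc 0))"
  using assms by (simp add: field_simps power2_eq_square)

theorem mainTheorem3:
  fixes \<nu> :: "'n::finite heis" and d :: real and u :: "'n heis \<Rightarrow> real"
  assumes "norm \<nu> = 1"
    and "snd (snd \<nu>) = 0"
    and "u \<in> C0_infty (halfspace_plus \<nu> d)"
  shows "(LINT \<xi>:halfspace_plus \<nu> d|lborel. heis_grad_sq u \<xi>)
         \<ge> 1/4 * (LINT \<xi>:halfspace_plus \<nu> d|lborel.
                  \<bar>u \<xi>\<bar>\<^sup>2 / (infdist \<xi> (frontier (halfspace_plus \<nu> d)))\<^sup>2)"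
proof -
  obtain a b where nu: "\<nu> = (a, b, 0)"
    using assms(2) by (metis prod.collapse)
  have ab1: "a \<bullet> a + b \<bullet> b = 1"
  proof -
    have "\<nu> \<bullet> \<nu> = 1" using assms(1) power2_norm_eq_inner[of \<nu>] by simp
    then show ?thesis by (simp add: nu)
  qed
  define H where "H = halfspace_plus \<nu> d"
  define K where "K = closure {x. u x \<noteq> 0}"
  have sm: "smooth_on UNIV u" and cK: "compact K" and KH: "K \<subseteq> H"
    using assms(3) by (auto simp: C0_infty_def K_def H_def)
  have clK: "closed K" using cK compact_imp_closed by blast
  have u0: "\<And>x. x \<notin> K \<Longrightarrow> u x = 0" using closure_subset[of "{x. u x \<noteq> 0}"] unfolding K_def by blast
  have "u differentiable_on UNIV \<and> (\<forall>v. smooth_on UNIV (\<lambda>x. frechet_derivative u (at x) v))"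
    using sm by (cases rule: smooth_on.cases) auto
  then have du: "u differentiable_on UNIV" and sv: "\<And>v. smooth_on UNIV (\<lambda>x. frechet_derivative u (at x) v)"
    by auto
  define D where "D x = frechet_derivative u (at x)" for x
  have hasD: "(u has_derivative D x) (at x)" for x
    unfolding D_def using du by (meson UNIV_I differentiable_on_def frechet_derivative_works)
  have linD: "linear (D x)" for x using hasD has_derivative_linear by blast
  have Dc: "continuous_on UNIV (\<lambda>x. D x v)" for v
  proof -
    from sv[of v] have "(\<lambda>x. D x v) differentiable_on UNIV" unfolding D_def by (cases rule: smooth_on.cases) auto
    then show ?thesis by (rule differentiable_imp_continuous_on)
  qed
  have uc: "continuous_on UNIV u" using du differentiable_imp_continuous_on by blast
  have D0: "D x = (\<lambda>_. 0)" if "x \<notin> K" for x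
  proof -
    have "(u has_derivative (\<lambda>_. 0)) (at x within UNIV)"
      by (rule has_derivative_transform_within_open[OF has_derivative_const[of 0 "at x"], of "-K"])
        (use that clK u0 in auto)
    then show ?thesis using hasD[of x] has_derivative_unique by auto
  qed
  define \<delta> where "\<delta> \<xi> = \<xi> \<bullet> \<nu> - d" for \<xi>
  have \<delta>c: "continuous_on UNIV \<delta>" unfolding \<delta>_def by (intro continuous_intros)
  have Hd: "H = {\<xi>. 0 < \<delta> \<xi>}" by (auto simp: H_def halfspace_plus_def \<delta>_def)
  have oH: "open H" unfolding Hd by (rule open_Collect_less[OF continuous_on_const \<delta>c])
  have Kd: "\<And>\<xi>. \<xi> \<in> K \<Longrightarrow> \<delta> \<xi> > 0" using KH Hd by auto
  define w where "w \<xi> = (a, b, 2*(a \<bullet> fst (snd \<xi>) - b \<bullet> fst \<xi>))" for \<xi> :: "'n heis"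
  have wnu: "w \<xi> \<bullet> \<nu> = 1" for \<xi> by (simp add: w_def nu ab1)
  have dline: "\<delta> (\<xi> + r *\<^sub>R w \<xi>) = \<delta> \<xi> + r" for \<xi> r by (simp add: \<delta>_def inner_add_left wnu)
  have winv: "w (\<xi> + r *\<^sub>R w \<xi>) = w \<xi>" for \<xi> r
    by (simp add: w_def inner_add_right inner_commute[of b a] algebra_simps)
  have wc: "continuous_on UNIV w" unfolding w_def by (intro continuous_intros)
  define V where "V \<xi> = D \<xi> (w \<xi>)" for \<xi>
  have Vexp: "V = (\<lambda>\<xi>. D \<xi> (a,b,0) + (2*(a \<bullet> fst (snd \<xi>) - b \<bullet> fst \<xi>)) * D \<xi> (0,0,1))"
  proof
    fix \<xi>
    have e: "w \<xi> = (a,b,0) + (2*(a \<bullet> fst (snd \<xi>) - b \<bullet> fst \<xi>)) *\<^sub>R ((0::real^'n),(0::real^'n),1::real)"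
      by (simp add: w_def)
    show "V \<xi> = D \<xi> (a,b,0) + (2*(a \<bullet> fst (snd \<xi>) - b \<bullet> fst \<xi>)) * D \<xi> (0,0,1)"
      unfolding V_def e by (simp only: linear_add[OF linD] linear_scale[OF linD] real_scaleR_def)
  qed
  have Vc: "continuous_on UNIV V" unfolding Vexp by (intro continuous_intros Dc)
  have V0: "\<And>x. x \<notin> K \<Longrightarrow> V x = 0" by (simp add: V_def D0)
  have CS: "(V \<xi>)\<^sup>2 \<le> heis_grad_sq u \<xi>" for \<xi>
  proof -
    obtain x y t where xi: "\<xi> = (x,y,t)" by (cases \<xi>)
    have "V \<xi> = D \<xi> (a, b, 2*(a \<bullet> y - b \<bullet> x))" by (simp add: V_def w_def xi)
    then show ?thesis
      using CS_step[OF linD[of \<xi>] ab1, where x=x and y=y]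
      by (simp add: heis_grad_sq_def heisX_def heisY_def xi D_def)
  qed
  have Geq: "heis_grad_sq u = (\<lambda>\<xi>. \<Sum>i\<in>UNIV. (D \<xi> (axis i 1,0,0) + 2*(fst (snd \<xi>) $ i) * D \<xi> (0,0,1))\<^sup>2
        + (D \<xi> (0, axis i 1, 0) - 2*(fst \<xi> $ i) * D \<xi> (0,0,1))\<^sup>2)"
    by (auto simp: fun_eq_iff heis_grad_sq_def heisX_def heisY_def D_def split: prod.splits)
  have Gc: "continuous_on UNIV (heis_grad_sq u)" unfolding Geq by (intro continuous_intros Dc)
  have G0: "heis_grad_sq u x = 0" if "x \<notin> K" for x
    unfolding Geq using D0[OF that] by simp
  define f where "f \<xi> = (if \<delta> \<xi> > 0 then (u \<xi>)\<^sup>2 / \<delta> \<xi> else 0)" for \<xi>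
  define g where "g \<xi> = (if \<delta> \<xi> > 0 then 2 * u \<xi> * V \<xi> / \<delta> \<xi> - (u \<xi>)\<^sup>2 / (\<delta> \<xi>)\<^sup>2 else 0)" for \<xi>
  define p where "p \<xi> = (if \<delta> \<xi> > 0 then (u \<xi>)\<^sup>2 / (\<delta> \<xi>)\<^sup>2 else 0)" for \<xi>
  define m where "m \<xi> = (if \<delta> \<xi> > 0 then u \<xi> * V \<xi> / \<delta> \<xi> else 0)" for \<xi>
  have uH: "continuous_on H u" using uc by (rule continuous_on_subset) auto
  have VH: "continuous_on H V" using Vc by (rule continuous_on_subset) auto
  have dH: "continuous_on H \<delta>" using \<delta>c by (rule continuous_on_subset) auto
  have dnz: "\<And>x. x \<in> H \<Longrightarrow> \<delta> x \<noteq> 0" using Hd by auto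
  have fc: "continuous_on UNIV f"
  proof (rule glue_cont[OF oH KH clK])
    have "continuous_on H (\<lambda>\<xi>. (u \<xi>)\<^sup>2 / \<delta> \<xi>)" by (intro continuous_intros uH dH) (auto simp: Hd)
    then show "continuous_on H f" by (rule continuous_on_eq) (auto simp: f_def Hd)
  qed (simp add: f_def u0)
  have gc: "continuous_on UNIV g"
  proof (rule glue_cont[OF oH KH clK])
    have "continuous_on H (\<lambda>\<xi>. 2 * u \<xi> * V \<xi> / \<delta> \<xi> - (u \<xi>)\<^sup>2 / (\<delta> \<xi>)\<^sup>2)"
      by (intro continuous_intros uH dH VH) (auto simp: Hd)
    then show "continuous_on H g" by (rule continuous_on_eq) (auto simp: g_def Hd)
  qed (simp add: g_def u0)
  have pc: "continuous_on UNIV p"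
  proof (rule glue_cont[OF oH KH clK])
    have "continuous_on H (\<lambda>\<xi>. (u \<xi>)\<^sup>2 / (\<delta> \<xi>)\<^sup>2)"
      by (intro continuous_intros uH dH) (auto simp: Hd)
    then show "continuous_on H p" by (rule continuous_on_eq) (auto simp: p_def Hd)
  qed (simp add: p_def u0)
  have mc: "continuous_on UNIV m"
  proof (rule glue_cont[OF oH KH clK])
    have "continuous_on H (\<lambda>\<xi>. u \<xi> * V \<xi> / \<delta> \<xi>)"
      by (intro continuous_intros uH dH VH) (auto simp: Hd)
    then show "continuous_on H m" by (rule continuous_on_eq) (auto simp: m_def Hd)
  qed (simp add: m_def u0)
  have f0: "\<And>x. x \<notin> K \<Longrightarrow> f x = 0" by (simp add: f_def u0)
  have g0: "\<And>x. x \<notin> K \<Longrightarrow> g x = 0" by (simp add: g_def u0)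
  have p0: "\<And>x. x \<notin> K \<Longrightarrow> p x = 0" by (simp add: p_def u0)
  have m0: "\<And>x. x \<notin> K \<Longrightarrow> m x = 0" by (simp add: m_def u0)
  have der: "((\<lambda>r. f (\<xi> + r *\<^sub>R w \<xi>)) has_real_derivative g (\<xi> + r *\<^sub>R w \<xi>)) (at r)" for \<xi> r
  proof (cases "\<xi> + r *\<^sub>R w \<xi> \<in> K")
    case True
    define \<eta> where "\<eta> = \<xi> + r *\<^sub>R w \<xi>"
    have pos: "\<delta> \<xi> + r > 0" using Kd[OF True] dline by simp
    have lineD: "((\<lambda>s. \<xi> + s *\<^sub>R w \<xi>) has_derivative (\<lambda>h. h *\<^sub>R w \<xi>)) (at r)"
      by (auto intro!: derivative_eq_intros)
    have "((\<lambda>s. u (\<xi> + s *\<^sub>R w \<xi>)) has_derivative (\<lambda>h. D \<eta> (h *\<^sub>R w \<xi>))) (at r)"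
      using has_derivative_compose[OF lineD hasD[of "\<xi> + r *\<^sub>R w \<xi>"]] by (simp add: \<eta>_def)
    moreover have "(\<lambda>h. D \<eta> (h *\<^sub>R w \<xi>)) = (\<lambda>h. V \<eta> * h)"
      by (auto simp: fun_eq_iff V_def \<eta>_def winv linear_scale[OF linD])
    ultimately have dU: "((\<lambda>s. u (\<xi> + s *\<^sub>R w \<xi>)) has_real_derivative V \<eta>) (at r)"
      by (simp add: has_field_derivative_def)
    have dU2: "((\<lambda>s. (u (\<xi> + s *\<^sub>R w \<xi>))\<^sup>2) has_real_derivative 2 * u \<eta> * V \<eta>) (at r)"
      using DERIV_mult[OF dU dU] by (simp add: power2_eq_square algebra_simps \<eta>_def)
    have dd: "((\<lambda>s. \<delta> \<xi> + s) has_real_derivative 1) (at r)" by (auto intro!: derivative_eq_intros)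
    have dQ: "((\<lambda>s. (u (\<xi> + s *\<^sub>R w \<xi>))\<^sup>2 / (\<delta> \<xi> + s)) has_real_derivative
        (2 * u \<eta> * V \<eta> * (\<delta> \<xi> + r) - 1 * (u \<eta>)\<^sup>2) / ((\<delta> \<xi> + r) ^ Suc (Suc 0))) (at r)"
      using DERIV_quotient[OF dU2 dd] pos by (simp add: \<eta>_def)
    have geq: "g \<eta> = (2 * u \<eta> * V \<eta> * (\<delta> \<xi> + r) - 1 * (u \<eta>)\<^sup>2) / ((\<delta> \<xi> + r) ^ Suc (Suc 0))"
    proof -
      have "g \<eta> = 2 * u \<eta> * V \<eta> / (\<delta> \<xi> + r) - (u \<eta>)\<^sup>2 / (\<delta> \<xi> + r)\<^sup>2"
        using pos by (simp add: g_def \<eta>_def dline)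
      also have "\<dots> = (2 * u \<eta> * V \<eta> * (\<delta> \<xi> + r) - 1 * (u \<eta>)\<^sup>2) / ((\<delta> \<xi> + r) ^ Suc (Suc 0))"
        by (rule quot_alg) (use pos in auto)
      finally show ?thesis .
    qed
    show ?thesis
    proof (rule has_field_derivative_transform_within_open[where S="{-\<delta> \<xi><..}"])
      show "((\<lambda>s. (u (\<xi> + s *\<^sub>R w \<xi>))\<^sup>2 / (\<delta> \<xi> + s)) has_real_derivative g (\<xi> + r *\<^sub>R w \<xi>)) (at r)"
        using dQ geq by (simp add: \<eta>_def)
    qed (use pos in \<open>auto simp: f_def dline\<close>)
  next
    case False
    have oN: "open ((\<lambda>s. \<xi> + s *\<^sub>R w \<xi>) -` (-K))"
      by (intro open_vimage continuous_intros) (use clK in auto)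
    have "g (\<xi> + r *\<^sub>R w \<xi>) = 0" using False g0 by simp
    then show ?thesis
      using has_field_derivative_transform_within_open[OF DERIV_const[of 0 "at r"] oN, of "\<lambda>s. f (\<xi> + s *\<^sub>R w \<xi>)"]
        False f0 by auto
  qed
  have Phi: "\<And>s. distr lborel borel (\<lambda>\<xi>. \<xi> + s *\<^sub>R w \<xi>) = lborel"
    unfolding w_def by (rule Phi_distr)
  have intg: "integral\<^sup>L lborel g = 0"
    by (rule integral_deriv_zero[OF Phi wc winv fc gc cK f0 g0 der])
  have ip: "integrable lborel p" by (rule integrable_cK[OF pc cK p0])
  have im: "integrable lborel m" by (rule integrable_cK[OF mc cK m0])
  have iV: "integrable lborel (\<lambda>x. (V x)\<^sup>2)" by (rule integrable_cK[OF _ cK]) (auto intro!: continuous_intros Vc simp: V0)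
  have iG: "integrable lborel (heis_grad_sq u)" by (rule integrable_cK[OF Gc cK G0])
  have gpm: "g = (\<lambda>\<xi>. 2 * m \<xi> - p \<xi>)" by (auto simp: fun_eq_iff g_def m_def p_def)
  have pm: "integral\<^sup>L lborel p = 2 * integral\<^sup>L lborel m"
    using intg ip im unfolding gpm by simp
  have pw: "2 * m \<xi> \<le> p \<xi> / 2 + 2 * (V \<xi>)\<^sup>2" for \<xi>
  proof (cases "\<delta> \<xi> > 0")
    case True
    define X where "X = u \<xi> / \<delta> \<xi>"
    have "m \<xi> = X * V \<xi>" "p \<xi> = X\<^sup>2" using True by (simp_all add: m_def p_def X_def power_divide)
    moreover have "0 \<le> (X - 2 * V \<xi>)\<^sup>2" by simp
    ultimately show ?thesis by (simp add: power2_eq_square algebra_simps)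
  qed (simp add: m_def p_def)
  have "2 * integral\<^sup>L lborel m = integral\<^sup>L lborel (\<lambda>\<xi>. 2 * m \<xi>)" by simp
  also have "\<dots> \<le> integral\<^sup>L lborel (\<lambda>\<xi>. p \<xi> / 2 + 2 * (V \<xi>)\<^sup>2)"
    by (rule integral_mono) (use ip im iV pw in auto)
  also have "\<dots> = integral\<^sup>L lborel p / 2 + 2 * integral\<^sup>L lborel (\<lambda>\<xi>. (V \<xi>)\<^sup>2)"
    using ip iV by simp
  finally have p4: "integral\<^sup>L lborel p \<le> 4 * integral\<^sup>L lborel (\<lambda>\<xi>. (V \<xi>)\<^sup>2)" using pm by simp
  have VG: "integral\<^sup>L lborel (\<lambda>\<xi>. (V \<xi>)\<^sup>2) \<le> integral\<^sup>L lborel (heis_grad_sq u)"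
    by (rule integral_mono[OF iV iG CS])
  have nu0: "\<nu> \<noteq> 0" using assms(1) by auto
  have fr: "frontier H = {x. \<nu> \<bullet> x = d}"
    using frontier_halfspace_gt[of \<nu> d] nu0 by (simp add: H_def halfspace_plus_def inner_commute)
  have L: "(LINT \<xi>:H|lborel. heis_grad_sq u \<xi>) = integral\<^sup>L lborel (heis_grad_sq u)"
    unfolding set_lebesgue_integral_def
  proof (rule Bochner_Integration.integral_cong)
    fix x show "indicator H x *\<^sub>R heis_grad_sq u x = heis_grad_sq u x"
      using G0[of x] KH by (cases "x \<in> H") auto
  qed simp
  have R: "(LINT \<xi>:H|lborel. \<bar>u \<xi>\<bar>\<^sup>2 / (infdist \<xi> (frontier H))\<^sup>2) = integral\<^sup>L lborel p"
    unfolding set_lebesgue_integral_def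
  proof (rule Bochner_Integration.integral_cong)
    fix x show "indicator H x *\<^sub>R (\<bar>u x\<bar>\<^sup>2 / (infdist x (frontier H))\<^sup>2) = p x"
    proof (cases "x \<in> H")
      case True
      then have "\<delta> x > 0" using Hd by auto
      moreover have "infdist x (frontier H) = \<bar>\<delta> x\<bar>"
        unfolding fr \<delta>_def by (rule infdist_hyperplane[OF assms(1)])
      ultimately show ?thesis using True by (simp add: p_def)
    next
      case False then show ?thesis using Hd by (simp add: p_def)
    qed
  qed simp
  show ?thesis unfolding H_def[symmetric] L R using p4 VG by simp
qed


end
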